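(* Let $K=\prod_{i=1}^n[-a_i/2,a_i/2]\subset\mathbb{R}^n$ with $0<a_1\le a_2\le\dots\le a_n$, let $d^2=\sum_{i=1}^n a_i^2$, $\sigma>0$, and consider $Y=\mu+\xi$, $\mu\in K$, $\xi\sim N(0,\sigma^2\mathbb{I}_n)$. If $\sum_{i=1}^n a_i^2\le\sigma^2$, the minimax risk $\inf_{\hat\nu}\sup_{\mu\in K}\mathbb{E}\|\hat\nu(Y)-\mu\|^2$ is of order $d^2$. Otherwise it is of order $(k+2)\sigma^2\wedge d^2$, where $k\in\{0,\dots,n-1\}$ is such that $(k+1)\sigma^2\le\sum_{i=1}^{n-k}a_i^2$ but $(k+2)\sigma^2>\sum_{i=1}^{n-k-1}a_i^2$. Here "of order $r$" means bounded above and below by absolute constant multiples of $r$.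
   Context: $\|\cdot\|$ is the Euclidean norm; the infimum is over Borel measurable estimators $\hat\nu:\mathbb{R}^n\to\mathbb{R}^n$; $a\wedge b=\min(a,b)$; empty sums equal $0$. *)

theory Defs
  imports "HOL-Probability.Probability"
begin

text \<open>Vectors in R^n are represented as extensional functions nat => real on {..<n}
  (elements of the product measure space PiM {..<n} (\<lambda>_. lborel)).\<close>

definition vec_space :: "nat \<Rightarrow> (nat \<Rightarrow> real) measure" where
  "vec_space n = PiM {..<n} (\<lambda>_. lborel)"

definition gauss_noise :: "nat \<Rightarrow> real \<Rightarrow> (nat \<Rightarrow> real) measure" where
  "gauss_noise n \<sigma> = PiM {..<n} (\<lambda>_. density lborel (normal_density 0 \<sigma>))"

definition estimators :: "nat \<Rightarrow> ((nat \<Rightarrow> real) \<Rightarrow> (nat \<Rightarrow> real)) set" where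
  "estimators n = measurable (vec_space n) (vec_space n)"

text \<open>The box K = prod [-a_i/2, a_i/2] (indices shifted to 0..n-1).\<close>
definition box :: "nat \<Rightarrow> (nat \<Rightarrow> real) \<Rightarrow> (nat \<Rightarrow> real) set" where
  "box n a = PiE {..<n} (\<lambda>i. {- a i / 2 .. a i / 2})"

definition risk :: "nat \<Rightarrow> real \<Rightarrow> ((nat \<Rightarrow> real) \<Rightarrow> (nat \<Rightarrow> real)) \<Rightarrow> (nat \<Rightarrow> real) \<Rightarrow> ennreal" where
  "risk n \<sigma> \<nu> \<mu> = (\<integral>\<^sup>+ \<xi>. ennreal (\<Sum>i<n. (\<nu> (restrict (\<lambda>j. \<mu> j + \<xi> j) {..<n}) i - \<mu> i)\<^sup>2)
      \<partial>gauss_noise n \<sigma>)"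

definition minimax_risk :: "nat \<Rightarrow> real \<Rightarrow> (nat \<Rightarrow> real) \<Rightarrow> ennreal" where
  "minimax_risk n \<sigma> a = (INF \<nu>\<in>estimators n. SUP \<mu>\<in>box n a. risk n \<sigma> \<nu> \<mu>)"

end

theory Submission
  imports Defs
begin

lemma exp2_sqrt_bound: "exp 2 * sqrt (2 * pi) \<le> (24::real)"
proof -
  have e: "exp (2::real) \<le> 8"
  proof -
    have "exp (2::real) = exp 1 * exp 1" by (simp flip: exp_add)
    also have "\<dots> \<le> 2.72 * 2.72" using e_less_272 by (intro mult_mono) auto
    finally show ?thesis by simp
  qed
  have "sqrt (2 * pi) \<le> sqrt 9" using pi_less_4 by (intro real_sqrt_le_mono) simp
  then have s: "sqrt (2*pi) \<le> 3" by simp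
  show ?thesis using mult_mono[OF e s] by simp
qed

lemma nd_lower:
  assumes "0 < \<sigma>" "\<bar>x\<bar> \<le> 2 * \<sigma>"
  shows "1 / (24 * \<sigma>) \<le> normal_density 0 \<sigma> x"
proof -
  have sq: "sqrt (2 * pi * \<sigma>\<^sup>2) = sqrt (2*pi) * \<sigma>" using assms by (simp add: real_sqrt_mult)
  have "x\<^sup>2 \<le> (2*\<sigma>)\<^sup>2" using assms by (metis abs_le_square_iff abs_of_pos mult_pos_pos zero_less_numeral abs_le_D1 order.trans)
  then have "x\<^sup>2 / (2 * \<sigma>\<^sup>2) \<le> 2" using assms by (simp add: field_simps power2_eq_square)
  then have ex: "exp (-2) \<le> exp (-(x - 0)\<^sup>2 / (2 * \<sigma>\<^sup>2))" by simp
  have "1 / (24 * \<sigma>) \<le> exp (-2) / (sqrt (2*pi) * \<sigma>)"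
    using exp2_sqrt_bound assms by (simp add: field_simps exp_minus)
  also have "\<dots> \<le> exp (-(x - 0)\<^sup>2 / (2 * \<sigma>\<^sup>2)) / (sqrt (2*pi) * \<sigma>)"
    using ex assms by (intro divide_right_mono) auto
  finally show ?thesis unfolding normal_density_def sq by simp
qed

lemma oneD:
  fixes g :: "real \<Rightarrow> real"
  assumes g[measurable]: "g \<in> borel_measurable borel" and t: "0 < t" "t \<le> \<sigma>"
  shows "ennreal (t\<^sup>2 / 6) \<le> (\<integral>\<^sup>+x. ennreal ((g (t + x) - t)\<^sup>2) + ennreal ((g (-t + x) + t)\<^sup>2)
            \<partial>density lborel (normal_density 0 \<sigma>))"
proof -
  have s: "0 < \<sigma>" using t by simp
  define A where "A y = ennreal (normal_density 0 \<sigma> (y - t) * (g y - t)\<^sup>2)" for y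
  define B where "B y = ennreal (normal_density 0 \<sigma> (y + t) * (g y + t)\<^sup>2)" for y
  have [measurable]: "A \<in> borel_measurable borel" "B \<in> borel_measurable borel"
    unfolding A_def B_def by measurable
  have "(\<integral>\<^sup>+x. ennreal ((g (t + x) - t)\<^sup>2) + ennreal ((g (-t + x) + t)\<^sup>2)
            \<partial>density lborel (normal_density 0 \<sigma>))
      = (\<integral>\<^sup>+x. ennreal (normal_density 0 \<sigma> x) * (ennreal ((g (t + x) - t)\<^sup>2) + ennreal ((g (-t + x) + t)\<^sup>2)) \<partial>lborel)"
    by (subst nn_integral_density) auto
  also have "\<dots> = (\<integral>\<^sup>+x. A (t + 1 * x) + B (-t + 1 * x) \<partial>lborel)"
    by (intro nn_integral_cong) (simp add: A_def B_def distrib_left ennreal_mult)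
  also have "\<dots> = (\<integral>\<^sup>+x. A (t + 1 * x) \<partial>lborel) + (\<integral>\<^sup>+x. B (-t + 1 * x) \<partial>lborel)"
    by (intro nn_integral_add) auto
  also have "\<dots> = (\<integral>\<^sup>+x. A x \<partial>lborel) + (\<integral>\<^sup>+x. B x \<partial>lborel)"
    using nn_integral_real_affine[of A 1 t] nn_integral_real_affine[of B 1 "-t"] by simp
  also have "\<dots> = (\<integral>\<^sup>+x. A x + B x \<partial>lborel)"
    by (intro nn_integral_add[symmetric]) auto
  also have "\<dots> \<ge> (\<integral>\<^sup>+x. ennreal (t\<^sup>2 / (12 * \<sigma>)) * indicator {-\<sigma>..\<sigma>} x \<partial>lborel)"
  proof (intro nn_integral_mono)
    fix x
    show "ennreal (t\<^sup>2 / (12 * \<sigma>)) * indicator {-\<sigma>..\<sigma>} x \<le> A x + B x"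
    proof (cases "x \<in> {-\<sigma>..\<sigma>}")
      case True
      then have "\<bar>x - t\<bar> \<le> 2 * \<sigma>" "\<bar>x + t\<bar> \<le> 2 * \<sigma>" using t by auto
      then have l1: "1 / (24 * \<sigma>) \<le> normal_density 0 \<sigma> (x - t)" and l2: "1 / (24 * \<sigma>) \<le> normal_density 0 \<sigma> (x + t)"
        using nd_lower s by auto
      have "t\<^sup>2 / (12 * \<sigma>) = 1 / (24 * \<sigma>) * ((g x - t)\<^sup>2 + (g x + t)\<^sup>2) - 1 / (24 * \<sigma>) * 2 * (g x)\<^sup>2"
        using s by (simp add: field_simps power2_eq_square)
      also have "\<dots> \<le> 1 / (24 * \<sigma>) * ((g x - t)\<^sup>2 + (g x + t)\<^sup>2)"
        using s by simp
      also have "\<dots> \<le> normal_density 0 \<sigma> (x - t) * (g x - t)\<^sup>2 + normal_density 0 \<sigma> (x + t) * (g x + t)\<^sup>2"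
        unfolding distrib_left using l1 l2 by (intro add_mono mult_right_mono) auto
      finally have "t\<^sup>2 / (12 * \<sigma>) \<le> normal_density 0 \<sigma> (x - t) * (g x - t)\<^sup>2 + normal_density 0 \<sigma> (x + t) * (g x + t)\<^sup>2" .
      then show ?thesis using True unfolding A_def B_def
        by (simp add: ennreal_plus[symmetric] del: ennreal_plus)
    qed simp
  qed
  also have "(\<integral>\<^sup>+x. ennreal (t\<^sup>2 / (12 * \<sigma>)) * indicator {-\<sigma>..\<sigma>} x \<partial>lborel) = ennreal (t\<^sup>2 / (12 * \<sigma>)) * ennreal (2 * \<sigma>)"
    using s by (subst nn_integral_cmult_indicator) auto
  also have "\<dots> = ennreal (t\<^sup>2 / 6)"
    using s by (simp add: ennreal_mult[symmetric])
  finally show ?thesis by simp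
qed

lemma meas_ucm: "f \<in> borel_measurable (uniform_count_measure A)"
  by (subst measurable_cong_sets[OF sets_uniform_count_measure_count_space refl]) simp

lemma meas_comp_ucm: "j \<in> I \<Longrightarrow> (\<lambda>\<mu>. \<mu> j) \<in> borel_measurable (PiM I (\<lambda>i. uniform_count_measure (S i)))"
  using measurable_compose[OF measurable_component_singleton[of j I "\<lambda>i. uniform_count_measure (S i)"] meas_ucm[of "\<lambda>x. x" "S j"]] by simp

lemma meas_comp_N: "j \<in> I \<Longrightarrow> (\<lambda>\<xi>. \<xi> j) \<in> borel_measurable (PiM I (\<lambda>_. density lborel f))"
proof -
  assume j: "j \<in> I"
  have "(\<lambda>x. x) \<in> measurable (density lborel f) borel"
    by (rule measurable_ident_sets) simp
  from measurable_compose[OF measurable_component_singleton[OF j] this] show ?thesis by simp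
qed

locale LB =
  fixes n :: nat and \<sigma> :: real and T :: "nat \<Rightarrow> real" and \<nu> :: "(nat \<Rightarrow> real) \<Rightarrow> (nat \<Rightarrow> real)"
  assumes s: "0 < \<sigma>" and T: "\<And>i. 0 < T i" "\<And>i. T i \<le> \<sigma>" and nu: "\<nu> \<in> estimators n"
begin

definition "\<pi> i = uniform_count_measure {- T i, T i}"
definition "N = density lborel (normal_density 0 \<sigma>)"
definition "Pri = PiM {..<n} \<pi>"
definition "h i \<mu> \<xi> = ennreal ((\<nu> (restrict (\<lambda>j. \<mu> j + \<xi> j) {..<n}) i - \<mu> i)\<^sup>2)"

lemma gamma: "gauss_noise n \<sigma> = PiM {..<n} (\<lambda>_. N)"
  unfolding gauss_noise_def N_def ..

lemma nu_meas[measurable]: "\<nu> \<in> measurable (PiM {..<n} (\<lambda>_. lborel)) (PiM {..<n} (\<lambda>_. lborel))"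
  using nu unfolding estimators_def vec_space_def .

lemma prob_pi: "prob_space (\<pi> i)"
  unfolding \<pi>_def by (rule prob_space_uniform_count_measure) auto

lemma prob_N: "prob_space N"
  unfolding N_def using prob_space_normal_density s by blast

lemma prod_pi: "product_prob_space \<pi>"
  by (simp add: product_prob_space_def product_prob_space_axioms_def product_sigma_finite_def
      prob_pi prob_space_imp_sigma_finite)

lemma prod_N: "product_prob_space (\<lambda>_::nat. N)"
  by (simp add: product_prob_space_def product_prob_space_axioms_def product_sigma_finite_def
      prob_N prob_space_imp_sigma_finite)

lemma prob_PiN: "prob_space (PiM I (\<lambda>_. N))"
  by (rule prob_space_PiM) (rule prob_N)

lemma prob_Pipi: "prob_space (PiM I \<pi>)"
  by (rule prob_space_PiM) (rule prob_pi)

lemma compPi: "j \<in> I \<Longrightarrow> (\<lambda>\<mu>. \<mu> j) \<in> borel_measurable (PiM I \<pi>)"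
  unfolding \<pi>_def by (rule meas_comp_ucm)

lemma compN: "j \<in> I \<Longrightarrow> (\<lambda>\<xi>. \<xi> j) \<in> borel_measurable (PiM I (\<lambda>_. N))"
  unfolding N_def by (rule meas_comp_N)

lemma h_meas_pair: "i < n \<Longrightarrow> (\<lambda>(\<mu>, \<xi>). h i \<mu> \<xi>) \<in> borel_measurable (Pri \<Otimes>\<^sub>M PiM {..<n} (\<lambda>_. N))"
proof -
  assume i: "i < n"
  have r: "(\<lambda>p. restrict (\<lambda>j. fst p j + snd p j) {..<n}) \<in> measurable (Pri \<Otimes>\<^sub>M PiM {..<n} (\<lambda>_. N)) (PiM {..<n} (\<lambda>_. lborel))"
  proof (rule measurable_restrict)
    fix j assume j: "j \<in> {..<n}"
    have "(\<lambda>p. fst p j) \<in> borel_measurable (Pri \<Otimes>\<^sub>M PiM {..<n} (\<lambda>_. N))"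
      using measurable_compose[OF measurable_fst[of _ "PiM {..<n} (\<lambda>_. N)"] compPi[OF j]] unfolding Pri_def by simp
    moreover have "(\<lambda>p. snd p j) \<in> borel_measurable (Pri \<Otimes>\<^sub>M PiM {..<n} (\<lambda>_. N))"
      using measurable_compose[OF measurable_snd[of Pri] compN[OF j]] by simp
    ultimately show "(\<lambda>p. fst p j + snd p j) \<in> measurable (Pri \<Otimes>\<^sub>M PiM {..<n} (\<lambda>_. N)) lborel"
      by simp
  qed
  have c: "(\<lambda>y. y i) \<in> borel_measurable (PiM {..<n} (\<lambda>_. lborel))"
    using i by simp
  have "(\<lambda>p. \<nu> (restrict (\<lambda>j. fst p j + snd p j) {..<n}) i) \<in> borel_measurable (Pri \<Otimes>\<^sub>M PiM {..<n} (\<lambda>_. N))"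
    using measurable_compose[OF measurable_compose[OF r nu_meas] c] by simp
  moreover have "(\<lambda>p. fst p i) \<in> borel_measurable (Pri \<Otimes>\<^sub>M PiM {..<n} (\<lambda>_. N))"
    using measurable_compose[OF measurable_fst[of _ "PiM {..<n} (\<lambda>_. N)"] compPi] i unfolding Pri_def by simp
  ultimately show ?thesis unfolding h_def case_prod_beta by measurable
qed

lemma h_meas_xi: "i < n \<Longrightarrow> (\<lambda>\<xi>. h i \<mu> \<xi>) \<in> borel_measurable (PiM {..<n} (\<lambda>_. N))"
proof -
  assume i: "i < n"
  have r: "(\<lambda>\<xi>. restrict (\<lambda>j. \<mu> j + \<xi> j) {..<n}) \<in> measurable (PiM {..<n} (\<lambda>_. N)) (PiM {..<n} (\<lambda>_. lborel))"
  proof (rule measurable_restrict)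
    fix j assume j: "j \<in> {..<n}"
    show "(\<lambda>\<xi>. \<mu> j + \<xi> j) \<in> measurable (PiM {..<n} (\<lambda>_. N)) lborel"
      using compN[OF j] by simp
  qed
  have c: "(\<lambda>y. y i) \<in> borel_measurable (PiM {..<n} (\<lambda>_. lborel))"
    using i by simp
  have "(\<lambda>\<xi>. \<nu> (restrict (\<lambda>j. \<mu> j + \<xi> j) {..<n}) i) \<in> borel_measurable (PiM {..<n} (\<lambda>_. N))"
    using measurable_compose[OF measurable_compose[OF r nu_meas] c] by simp
  then show ?thesis unfolding h_def by measurable
qed

lemma F_meas: "i < n \<Longrightarrow> (\<lambda>\<mu>. \<integral>\<^sup>+\<xi>. h i \<mu> \<xi> \<partial>PiM {..<n} (\<lambda>_. N)) \<in> borel_measurable Pri"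
proof -
  assume i: "i < n"
  interpret G: prob_space "PiM {..<n} (\<lambda>_. N)" by (rule prob_PiN)
  show ?thesis
    using G.borel_measurable_nn_integral[OF h_meas_pair[OF i]] .
qed


lemma inner_xi:
  assumes i: "i < n"
  shows "ennreal ((T i)\<^sup>2 / 6) \<le> (\<integral>\<^sup>+z. h i (x(i := T i)) (\<xi>r(i := z)) + h i (x(i := - T i)) (\<xi>r(i := z)) \<partial>N)"
proof -
  define w where "w = restrict (\<lambda>j. x j + \<xi>r j) {..<n}"
  define g where "g y = \<nu> (w(i := y)) i" for y
  have wi: "(\<lambda>y. w(i := y)) = (\<lambda>y. restrict (\<lambda>j. if j = i then y else x j + \<xi>r j) {..<n})"
    using i by (auto simp: w_def fun_eq_iff)
  have "(\<lambda>y. w(i := y)) \<in> measurable borel (PiM {..<n} (\<lambda>_. lborel))"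
    unfolding wi by (rule measurable_restrict) simp
  from measurable_compose[OF measurable_compose[OF this nu_meas] measurable_component_singleton[of i "{..<n}" "\<lambda>_. lborel"]]
  have gm: "g \<in> borel_measurable borel" using i unfolding g_def by simp
  have e: "restrict (\<lambda>j. (x(i := c)) j + (\<xi>r(i := z)) j) {..<n} = w(i := c + z)" for c z
    using i by (auto simp: w_def fun_eq_iff)
  have e1: "h i (x(i := T i)) (\<xi>r(i := z)) = ennreal ((g (T i + z) - T i)\<^sup>2)" for z
    unfolding h_def e g_def by simp
  have e2: "h i (x(i := - T i)) (\<xi>r(i := z)) = ennreal ((g (- T i + z) + T i)\<^sup>2)" for z
    unfolding h_def e g_def by simp
  have "(\<integral>\<^sup>+z. h i (x(i := T i)) (\<xi>r(i := z)) + h i (x(i := - T i)) (\<xi>r(i := z)) \<partial>N)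
     = (\<integral>\<^sup>+z. ennreal ((g (T i + z) - T i)\<^sup>2) + ennreal ((g (- T i + z) + T i)\<^sup>2) \<partial>N)"
    by (simp only: e1 e2)
  moreover have "ennreal ((T i)\<^sup>2 / 6) \<le> \<dots>"
    unfolding N_def by (rule oneD[OF gm T(1) T(2)])
  ultimately show ?thesis by simp
qed

lemma pair_xi:
  assumes i: "i < n"
  shows "ennreal ((T i)\<^sup>2 / 6) \<le> (\<integral>\<^sup>+\<xi>. h i (x(i := T i)) \<xi> \<partial>PiM {..<n} (\<lambda>_. N)) + (\<integral>\<^sup>+\<xi>. h i (x(i := - T i)) \<xi> \<partial>PiM {..<n} (\<lambda>_. N))"
proof -
  define I where "I = {..<n} - {i}"
  have ins: "{..<n} = insert i I" and fI: "finite I" and iI: "i \<notin> I" using i by (auto simp: I_def)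
  interpret P: product_prob_space "\<lambda>_::nat. N" by (rule prod_N)
  interpret Q: prob_space "PiM I (\<lambda>_. N)" by (rule prob_PiN)
  have m1: "(\<lambda>\<xi>. h i (x(i := T i)) \<xi>) \<in> borel_measurable (PiM {..<n} (\<lambda>_. N))"
   and m2: "(\<lambda>\<xi>. h i (x(i := - T i)) \<xi>) \<in> borel_measurable (PiM {..<n} (\<lambda>_. N))"
    using h_meas_xi[OF i] by auto
  have "(\<integral>\<^sup>+\<xi>. h i (x(i := T i)) \<xi> \<partial>PiM {..<n} (\<lambda>_. N)) + (\<integral>\<^sup>+\<xi>. h i (x(i := - T i)) \<xi> \<partial>PiM {..<n} (\<lambda>_. N))
      = (\<integral>\<^sup>+\<xi>. h i (x(i := T i)) \<xi> + h i (x(i := - T i)) \<xi> \<partial>PiM {..<n} (\<lambda>_. N))"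
    using m1 m2 by (intro nn_integral_add[symmetric]) auto
  also have "\<dots> = (\<integral>\<^sup>+\<xi>r. (\<integral>\<^sup>+z. h i (x(i := T i)) (\<xi>r(i := z)) + h i (x(i := - T i)) (\<xi>r(i := z)) \<partial>N) \<partial>PiM I (\<lambda>_. N))"
  proof -
    have "(\<lambda>\<xi>. h i (x(i := T i)) \<xi> + h i (x(i := - T i)) \<xi>) \<in> borel_measurable (PiM (insert i I) (\<lambda>_. N))"
      using m1 m2 unfolding ins by measurable
    from P.product_nn_integral_insert[OF fI iI this] show ?thesis unfolding ins by simp
  qed
  also have "\<dots> \<ge> (\<integral>\<^sup>+\<xi>r. ennreal ((T i)\<^sup>2 / 6) \<partial>PiM I (\<lambda>_. N))"
    by (intro nn_integral_mono inner_xi[OF i])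
  also have "(\<integral>\<^sup>+\<xi>r. ennreal ((T i)\<^sup>2 / 6) \<partial>PiM I (\<lambda>_. N)) = ennreal ((T i)\<^sup>2 / 6)"
    by (simp add: Q.emeasure_space_1)
  finally show ?thesis by (simp add: fun_upd_def)
qed

lemma coordB:
  assumes i: "i < n"
  shows "ennreal ((T i)\<^sup>2 / 12) \<le> (\<integral>\<^sup>+\<mu>. (\<integral>\<^sup>+\<xi>. h i \<mu> \<xi> \<partial>PiM {..<n} (\<lambda>_. N)) \<partial>Pri)"
proof -
  define I where "I = {..<n} - {i}"
  have ins: "{..<n} = insert i I" and fI: "finite I" and iI: "i \<notin> I" using i by (auto simp: I_def)
  interpret P: product_prob_space \<pi> by (rule prod_pi)
  interpret Q: prob_space "PiM I \<pi>" by (rule prob_Pipi)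
  define F where "F \<mu> = (\<integral>\<^sup>+\<xi>. h i \<mu> \<xi> \<partial>PiM {..<n} (\<lambda>_. N))" for \<mu>
  have eq: "Pri = PiM (insert i I) \<pi>" by (simp add: Pri_def ins)
  have Fm: "F \<in> borel_measurable (PiM (insert i I) \<pi>)"
    using F_meas[OF i] unfolding F_def eq .
  have "(\<integral>\<^sup>+\<mu>. F \<mu> \<partial>Pri) = (\<integral>\<^sup>+x. (\<integral>\<^sup>+y. F (x(i := y)) \<partial>\<pi> i) \<partial>PiM I \<pi>)"
    unfolding eq by (rule P.product_nn_integral_insert[OF fI iI Fm])
  also have "\<dots> \<ge> (\<integral>\<^sup>+x. ennreal ((T i)\<^sup>2 / 12) \<partial>PiM I \<pi>)"
  proof (intro nn_integral_mono)
    fix x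
    have ne: "- T i \<noteq> T i" using T(1)[of i] by simp
    have "(\<integral>\<^sup>+y. F (x(i := y)) \<partial>\<pi> i) = (\<Sum>a\<in>{- T i, T i}. ennreal (1 / real (card {- T i, T i})) * F (x(i := a)))"
      unfolding \<pi>_def uniform_count_measure_def by (rule nn_integral_point_measure_finite) simp
    also have "\<dots> = ennreal (1/2) * (F (x(i := T i)) + F (x(i := - T i)))"
      using ne by (simp add: add.commute distrib_left)
    also have "\<dots> \<ge> ennreal (1/2) * ennreal ((T i)\<^sup>2 / 6)"
      using pair_xi[OF i, of x] unfolding F_def by (intro mult_left_mono) auto
    also have "ennreal (1/2) * ennreal ((T i)\<^sup>2 / 6) = ennreal ((T i)\<^sup>2 / 12)"
      by (subst ennreal_mult[symmetric]) auto
    finally show "ennreal ((T i)\<^sup>2 / 12) \<le> (\<integral>\<^sup>+y. F (x(i := y)) \<partial>\<pi> i)" .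
  qed
  also have "(\<integral>\<^sup>+x. ennreal ((T i)\<^sup>2 / 12) \<partial>PiM I \<pi>) = ennreal ((T i)\<^sup>2 / 12)"
    by (simp add: Q.emeasure_space_1)
  finally show ?thesis unfolding F_def by (simp add: fun_upd_def)
qed


lemma risk_eq: "risk n \<sigma> \<nu> \<mu> = (\<Sum>i<n. \<integral>\<^sup>+\<xi>. h i \<mu> \<xi> \<partial>PiM {..<n} (\<lambda>_. N))"
proof -
  have "risk n \<sigma> \<nu> \<mu> = (\<integral>\<^sup>+\<xi>. (\<Sum>i<n. h i \<mu> \<xi>) \<partial>PiM {..<n} (\<lambda>_. N))"
    unfolding risk_def gamma h_def by (intro nn_integral_cong) simp
  also have "\<dots> = (\<Sum>i<n. \<integral>\<^sup>+\<xi>. h i \<mu> \<xi> \<partial>PiM {..<n} (\<lambda>_. N))"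
    by (rule nn_integral_sum) (use h_meas_xi in auto)
  finally show ?thesis .
qed

lemma bayes: "ennreal ((\<Sum>i<n. (T i)\<^sup>2) / 12) \<le> (\<integral>\<^sup>+\<mu>. risk n \<sigma> \<nu> \<mu> \<partial>Pri)"
proof -
  have "(\<integral>\<^sup>+\<mu>. risk n \<sigma> \<nu> \<mu> \<partial>Pri) = (\<Sum>i<n. \<integral>\<^sup>+\<mu>. (\<integral>\<^sup>+\<xi>. h i \<mu> \<xi> \<partial>PiM {..<n} (\<lambda>_. N)) \<partial>Pri)"
    unfolding risk_eq by (rule nn_integral_sum) (use F_meas in auto)
  also have "\<dots> \<ge> (\<Sum>i<n. ennreal ((T i)\<^sup>2 / 12))"
    by (intro sum_mono coordB) auto
  also have "(\<Sum>i<n. ennreal ((T i)\<^sup>2 / 12)) = ennreal ((\<Sum>i<n. (T i)\<^sup>2) / 12)"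
    by (simp add: sum_divide_distrib)
  finally show ?thesis .
qed

lemma bayes_sup:
  assumes "PiE {..<n} (\<lambda>i. {- T i, T i}) \<subseteq> B"
  shows "ennreal ((\<Sum>i<n. (T i)\<^sup>2) / 12) \<le> (SUP \<mu>\<in>B. risk n \<sigma> \<nu> \<mu>)"
proof -
  interpret Q: prob_space Pri unfolding Pri_def by (rule prob_Pipi)
  have sp: "space Pri = PiE {..<n} (\<lambda>i. {- T i, T i})"
    unfolding Pri_def space_PiM \<pi>_def space_uniform_count_measure ..
  have "(\<integral>\<^sup>+\<mu>. risk n \<sigma> \<nu> \<mu> \<partial>Pri) \<le> (\<integral>\<^sup>+\<mu>. (SUP \<mu>\<in>B. risk n \<sigma> \<nu> \<mu>) \<partial>Pri)"
    using assms sp by (intro nn_integral_mono) (auto intro: SUP_upper)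
  also have "\<dots> = (SUP \<mu>\<in>B. risk n \<sigma> \<nu> \<mu>)"
    by (simp add: Q.emeasure_space_1)
  finally show ?thesis using bayes by (rule order.trans[rotated])
qed

end

lemma lower_main:
  assumes "0 < \<sigma>" "\<And>i. 0 < T i" "\<And>i. T i \<le> \<sigma>" "PiE {..<n} (\<lambda>i. {- T i, T i}) \<subseteq> box n a"
  shows "ennreal ((\<Sum>i<n. (T i)\<^sup>2) / 12) \<le> minimax_risk n \<sigma> a"
  unfolding minimax_risk_def
proof (rule INF_greatest)
  fix \<nu> assume "\<nu> \<in> estimators n"
  then interpret LB n \<sigma> T \<nu> using assms by unfold_locales auto
  show "ennreal ((\<Sum>i<n. (T i)\<^sup>2) / 12) \<le> (SUP \<mu>\<in>box n a. risk n \<sigma> \<nu> \<mu>)"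
    by (rule bayes_sup[OF assms(4)])
qed


lemma second_moment:
  assumes s: "0 < \<sigma>"
  shows "(\<integral>\<^sup>+x. ennreal (x\<^sup>2) \<partial>density lborel (normal_density 0 \<sigma>)) = ennreal (\<sigma>\<^sup>2)"
proof -
  have c: "fact (2*1) / ((2/\<sigma>\<^sup>2)^1 * fact (1::nat)) = \<sigma>\<^sup>2" using s by simp
  have f: "(\<lambda>x. normal_density 0 \<sigma> x * (x-0)^(2*1)) = (\<lambda>x. normal_density 0 \<sigma> x * x\<^sup>2)" by simp
  have hb: "has_bochner_integral lborel (\<lambda>x. normal_density 0 \<sigma> x * x\<^sup>2) (\<sigma>\<^sup>2)"
    using normal_moment_even[of \<sigma> 0 1, OF s] unfolding f c .
  have "(\<integral>\<^sup>+x. ennreal (x\<^sup>2) \<partial>density lborel (normal_density 0 \<sigma>)) = (\<integral>\<^sup>+x. ennreal (normal_density 0 \<sigma> x * x\<^sup>2) \<partial>lborel)"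
    by (subst nn_integral_density) (auto simp: ennreal_mult)
  also have "\<dots> = ennreal (integral\<^sup>L lborel (\<lambda>x. normal_density 0 \<sigma> x * x\<^sup>2))"
    using hb by (intro nn_integral_eq_integral) (auto simp: has_bochner_integral_iff)
  also have "\<dots> = ennreal (\<sigma>\<^sup>2)" using hb by (simp add: has_bochner_integral_iff)
  finally show ?thesis .
qed

lemma marginal:
  assumes s: "0 < \<sigma>" and i: "i < n" and f[measurable]: "f \<in> borel_measurable borel"
  shows "(\<integral>\<^sup>+\<xi>. f (\<xi> i) \<partial>gauss_noise n \<sigma>) = (\<integral>\<^sup>+x. f x \<partial>density lborel (normal_density 0 \<sigma>))"
proof -
  define N where "N = density lborel (normal_density 0 \<sigma>)"
  define I where "I = {..<n} - {i}"
  have ins: "{..<n} = insert i I" and fI: "finite I" and iI: "i \<notin> I" using i by (auto simp: I_def)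
  have pN: "prob_space N" unfolding N_def using prob_space_normal_density s by blast
  interpret P: product_prob_space "\<lambda>_::nat. N"
    by (simp add: product_prob_space_def product_prob_space_axioms_def product_sigma_finite_def
      pN prob_space_imp_sigma_finite)
  interpret Q: prob_space "PiM I (\<lambda>_. N)" by (rule prob_space_PiM) (rule pN)
  have m: "(\<lambda>\<xi>. f (\<xi> i)) \<in> borel_measurable (PiM (insert i I) (\<lambda>_. N))"
    using measurable_compose[OF meas_comp_N[of i "insert i I" "normal_density 0 \<sigma>"] f] unfolding N_def by simp
  have "(\<integral>\<^sup>+\<xi>. f (\<xi> i) \<partial>gauss_noise n \<sigma>) = (\<integral>\<^sup>+\<xi>. f (\<xi> i) \<partial>PiM (insert i I) (\<lambda>_. N))"
    unfolding gauss_noise_def N_def ins ..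
  also have "\<dots> = (\<integral>\<^sup>+x. (\<integral>\<^sup>+y. f y \<partial>N) \<partial>PiM I (\<lambda>_. N))"
    using P.product_nn_integral_insert[OF fI iI m] by simp
  also have "\<dots> = (\<integral>\<^sup>+y. f y \<partial>N)" by (simp add: Q.emeasure_space_1)
  finally show ?thesis unfolding N_def .
qed

definition est :: "nat \<Rightarrow> nat \<Rightarrow> (nat \<Rightarrow> real) \<Rightarrow> (nat \<Rightarrow> real)" where
  "est n m y = restrict (\<lambda>i. if m \<le> i then y i else 0) {..<n}"

lemma est_meas: "est n m \<in> estimators n"
  unfolding estimators_def vec_space_def est_def
  by (rule measurable_restrict) simp

lemma upper_risk:
  assumes s: "0 < \<sigma>" and mu: "\<mu> \<in> box n a"
  shows "risk n \<sigma> (est n m) \<mu> \<le> ennreal (\<Sum>i<n. if m \<le> i then \<sigma>\<^sup>2 else (a i)\<^sup>2 / 4)"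
proof -
  have eq: "ennreal (\<Sum>i<n. (est n m (restrict (\<lambda>j. \<mu> j + \<xi> j) {..<n}) i - \<mu> i)\<^sup>2)
      = (\<Sum>i<n. ennreal (if m \<le> i then (\<xi> i)\<^sup>2 else (\<mu> i)\<^sup>2))" for \<xi>
  proof -
    have "(\<Sum>i<n. (est n m (restrict (\<lambda>j. \<mu> j + \<xi> j) {..<n}) i - \<mu> i)\<^sup>2)
      = (\<Sum>i<n. (if m \<le> i then (\<xi> i)\<^sup>2 else (\<mu> i)\<^sup>2))"
      by (rule sum.cong) (auto simp: est_def)
    then show ?thesis by (subst sum_ennreal) auto
  qed
  have em: "(\<lambda>x::real. ennreal (x\<^sup>2)) \<in> borel_measurable borel" by measurable
  have "risk n \<sigma> (est n m) \<mu> = (\<integral>\<^sup>+\<xi>. (\<Sum>i<n. ennreal (if m \<le> i then (\<xi> i)\<^sup>2 else (\<mu> i)\<^sup>2)) \<partial>gauss_noise n \<sigma>)"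
    unfolding risk_def eq ..
  also have "\<dots> = (\<Sum>i<n. \<integral>\<^sup>+\<xi>. ennreal (if m \<le> i then (\<xi> i)\<^sup>2 else (\<mu> i)\<^sup>2) \<partial>gauss_noise n \<sigma>)"
  proof (rule nn_integral_sum)
    fix i assume "i \<in> {..<n}"
    then have "(\<lambda>\<xi>. \<xi> i) \<in> borel_measurable (gauss_noise n \<sigma>)"
      unfolding gauss_noise_def by (rule meas_comp_N)
    note mc = measurable_compose[OF this em]
    show "(\<lambda>\<xi>. ennreal (if m \<le> i then (\<xi> i)\<^sup>2 else (\<mu> i)\<^sup>2)) \<in> borel_measurable (gauss_noise n \<sigma>)"
    proof (cases "m \<le> i")
      case True
      then show ?thesis using mc by (simp only: if_True)
    next
      case False
      then show ?thesis by (simp only: if_False) (rule borel_measurable_const)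
    qed
  qed
  also have "\<dots> \<le> (\<Sum>i<n. ennreal (if m \<le> i then \<sigma>\<^sup>2 else (a i)\<^sup>2 / 4))"
  proof (rule sum_mono)
    fix i assume i: "i \<in> {..<n}"
    have pg: "prob_space (gauss_noise n \<sigma>)" unfolding gauss_noise_def
      by (rule prob_space_PiM) (use prob_space_normal_density s in blast)
    show "(\<integral>\<^sup>+\<xi>. ennreal (if m \<le> i then (\<xi> i)\<^sup>2 else (\<mu> i)\<^sup>2) \<partial>gauss_noise n \<sigma>) \<le> ennreal (if m \<le> i then \<sigma>\<^sup>2 else (a i)\<^sup>2 / 4)"
    proof (cases "m \<le> i")
      case True
      have "(\<integral>\<^sup>+\<xi>. ennreal (if m \<le> i then (\<xi> i)\<^sup>2 else (\<mu> i)\<^sup>2) \<partial>gauss_noise n \<sigma>) = (\<integral>\<^sup>+\<xi>. ennreal ((\<xi> i)\<^sup>2) \<partial>gauss_noise n \<sigma>)"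
        using True by (simp only: if_True)
      also have "\<dots> = (\<integral>\<^sup>+x. ennreal (x\<^sup>2) \<partial>density lborel (normal_density 0 \<sigma>))"
        using i by (intro marginal[OF s _ em]) simp
      also have "\<dots> = ennreal (\<sigma>\<^sup>2)" by (rule second_moment[OF s])
      also have "\<dots> = ennreal (if m \<le> i then \<sigma>\<^sup>2 else (a i)\<^sup>2 / 4)" using True by (simp only: if_True)
      finally show ?thesis by (rule order.eq_iff[THEN iffD1, THEN conjunct1])
    next
      case False
      have "\<mu> \<in> PiE {..<n} (\<lambda>i. {- a i / 2 .. a i / 2})" using mu unfolding box_def .
      then have "\<mu> i \<in> {- a i / 2 .. a i / 2}" using i by (rule PiE_mem)
      then have h: "- a i / 2 \<le> \<mu> i" "\<mu> i \<le> a i / 2" by auto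
      have "\<bar>\<mu> i\<bar> \<le> a i / 2" unfolding abs_le_iff using h by (intro conjI) linarith+
      from power_mono[OF this abs_ge_zero, of 2]
      have "(\<mu> i)\<^sup>2 \<le> (a i / 2)\<^sup>2" by simp
      then have le: "(\<mu> i)\<^sup>2 \<le> (a i)\<^sup>2 / 4" by (simp add: power_divide)
      have "(\<integral>\<^sup>+\<xi>. ennreal (if m \<le> i then (\<xi> i)\<^sup>2 else (\<mu> i)\<^sup>2) \<partial>gauss_noise n \<sigma>) = (\<integral>\<^sup>+\<xi>. ennreal ((\<mu> i)\<^sup>2) \<partial>gauss_noise n \<sigma>)"
        using False by (simp only: if_False)
      also have "\<dots> = ennreal ((\<mu> i)\<^sup>2)"
        by (simp only: nn_integral_const prob_space.emeasure_space_1[OF pg] mult_1_right)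
      also have "\<dots> \<le> ennreal ((a i)\<^sup>2 / 4)" using le by (rule ennreal_leI)
      also have "\<dots> = ennreal (if m \<le> i then \<sigma>\<^sup>2 else (a i)\<^sup>2 / 4)" using False by (simp only: if_False)
      finally show ?thesis .
    qed
  qed
  also have "\<dots> = ennreal (\<Sum>i<n. if m \<le> i then \<sigma>\<^sup>2 else (a i)\<^sup>2 / 4)"
    by (rule sum_ennreal) simp
  finally show ?thesis .
qed

lemma upper_main:
  assumes s: "0 < \<sigma>"
  shows "minimax_risk n \<sigma> a \<le> ennreal (\<Sum>i<n. if m \<le> i then \<sigma>\<^sup>2 else (a i)\<^sup>2 / 4)"
proof -
  have "(SUP \<mu>\<in>box n a. risk n \<sigma> (est n m) \<mu>) \<le> ennreal (\<Sum>i<n. if m \<le> i then \<sigma>\<^sup>2 else (a i)\<^sup>2 / 4)"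
    by (intro SUP_least upper_risk[OF s])
  moreover have "minimax_risk n \<sigma> a \<le> (SUP \<mu>\<in>box n a. risk n \<sigma> (est n m) \<mu>)"
    unfolding minimax_risk_def by (intro INF_lower est_meas)
  ultimately show ?thesis by (rule order.trans[rotated])
qed


lemma lower_general:
  fixes a :: "nat \<Rightarrow> real"
  assumes pos: "\<forall>i<n. 0 < a i" and s: "0 < \<sigma>"
  shows "ennreal ((\<Sum>i<n. (min (a i) \<sigma>)\<^sup>2) / 48) \<le> minimax_risk n \<sigma> a"
proof -
  define T where "T i = (if i < n then min (a i) \<sigma> / 2 else \<sigma> / 2)" for i
  have T1: "0 < T i" for i using pos s by (auto simp: T_def)
  have T2: "T i \<le> \<sigma>" for i using pos s by (auto simp: T_def)
  have box: "PiE {..<n} (\<lambda>i. {- T i, T i}) \<subseteq> box n a"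
    unfolding box_def
  proof (rule PiE_mono)
    fix i assume "i \<in> {..<n}"
    then have "T i \<le> a i / 2" "0 < T i" using T1[of i] by (auto simp: T_def)
    then show "{- T i, T i} \<subseteq> {- a i / 2..a i / 2}" by auto
  qed
  have "(\<Sum>i<n. (T i)\<^sup>2) / 12 = (\<Sum>i<n. (min (a i) \<sigma>)\<^sup>2 / 4) / 12"
    by (intro arg_cong[where f="\<lambda>x. x / 12"] sum.cong) (auto simp: T_def power_divide)
  also have "\<dots> = (\<Sum>i<n. (min (a i) \<sigma>)\<^sup>2) / 48"
    by (simp add: sum_divide_distrib[symmetric])
  finally have eq: "(\<Sum>i<n. (T i)\<^sup>2) / 12 = (\<Sum>i<n. (min (a i) \<sigma>)\<^sup>2) / 48" .
  show ?thesis using lower_main[OF s T1 T2 box] unfolding eq .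
qed

lemma sum_min_eq:
  fixes a :: "nat \<Rightarrow> real"
  assumes pos: "\<forall>i<n. 0 < a i" and s: "0 < \<sigma>" and d: "(\<Sum>i<n. (a i)\<^sup>2) \<le> \<sigma>\<^sup>2"
  shows "(\<Sum>i<n. (min (a i) \<sigma>)\<^sup>2) = (\<Sum>i<n. (a i)\<^sup>2)"
proof (rule sum.cong)
  fix i assume i: "i \<in> {..<n}"
  have "(a i)\<^sup>2 \<le> (\<Sum>i<n. (a i)\<^sup>2)" by (rule member_le_sum) (use i in auto)
  then have "(a i)\<^sup>2 \<le> \<sigma>\<^sup>2" using d by linarith
  then have "a i \<le> \<sigma>" by (rule power2_le_imp_le[OF _ less_imp_le[OF s]])
  then show "(min (a i) \<sigma>)\<^sup>2 = (a i)\<^sup>2" by simp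
qed simp

lemma sum_min_ge:
  fixes a :: "nat \<Rightarrow> real"
  assumes mono: "\<forall>i j. i \<le> j \<longrightarrow> j < n \<longrightarrow> a i \<le> a j" and s: "0 < \<sigma>" and k: "k < n"
    and h: "(real k + 1) * \<sigma>\<^sup>2 \<le> (\<Sum>i<n-k. (a i)\<^sup>2)"
  shows "(real k + 1) * \<sigma>\<^sup>2 \<le> (\<Sum>i<n. (min (a i) \<sigma>)\<^sup>2)"
proof (cases "\<sigma> \<le> a (n-k-1)")
  case True
  have c: "card {n-k-1..<n} = k + 1" using k by simp
  have "(real k + 1) * \<sigma>\<^sup>2 = (\<Sum>i\<in>{n-k-1..<n}. \<sigma>\<^sup>2)" using c by simp
  also have "\<dots> = (\<Sum>i\<in>{n-k-1..<n}. (min (a i) \<sigma>)\<^sup>2)"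
  proof (rule sum.cong)
    fix i assume "i \<in> {n-k-1..<n}"
    then have "a (n-k-1) \<le> a i" using mono by auto
    then have "min (a i) \<sigma> = \<sigma>" using True by simp
    then show "\<sigma>\<^sup>2 = (min (a i) \<sigma>)\<^sup>2" by simp
  qed simp
  also have "\<dots> \<le> (\<Sum>i<n. (min (a i) \<sigma>)\<^sup>2)"
    by (rule sum_mono2) auto
  finally show ?thesis .
next
  case False
  have "(\<Sum>i<n-k. (a i)\<^sup>2) = (\<Sum>i<n-k. (min (a i) \<sigma>)\<^sup>2)"
  proof (rule sum.cong)
    fix i assume "i \<in> {..<n-k}"
    then have "a i \<le> a (n-k-1)" using mono k by auto
    then show "(a i)\<^sup>2 = (min (a i) \<sigma>)\<^sup>2" using False by (simp add: min_def)
  qed simp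
  also have "\<dots> \<le> (\<Sum>i<n. (min (a i) \<sigma>)\<^sup>2)"
    by (rule sum_mono2) auto
  finally show ?thesis using h by linarith
qed

lemma split_sum:
  fixes g :: "nat \<Rightarrow> real"
  shows "m \<le> n \<Longrightarrow> (\<Sum>i<n. if m \<le> i then c else g i) = real (n - m) * c + (\<Sum>i<m. g i)"
proof (induction n)
  case 0
  then show ?case by simp
next
  case (Suc n)
  show ?case
  proof (cases "m \<le> n")
    case True
    then show ?thesis using Suc by (simp add: Suc_diff_le algebra_simps)
  next
    case False
    then have m: "m = Suc n" using Suc by simp
    have "(\<Sum>i<Suc n. if m \<le> i then c else g i) = (\<Sum>i<Suc n. g i)"
      by (rule sum.cong) (use m in auto)
    then show ?thesis using m by simp
  qed
qed


lemma up_m: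
  fixes a :: "nat \<Rightarrow> real"
  assumes s: "0 < \<sigma>" and m: "m \<le> n"
  shows "minimax_risk n \<sigma> a \<le> ennreal (real (n - m) * \<sigma>\<^sup>2 + (\<Sum>i<m. (a i)\<^sup>2) / 4)"
  using upper_main[OF s, of n a m] unfolding split_sum[OF m] sum_divide_distrib[symmetric] .

lemma low1:
  fixes a :: "nat \<Rightarrow> real"
  assumes pos: "\<forall>i<n. 0 < a i" and s: "0 < \<sigma>" and d: "(\<Sum>i<n. (a i)\<^sup>2) \<le> \<sigma>\<^sup>2"
  shows "ennreal (1/96 * (\<Sum>i<n. (a i)\<^sup>2)) \<le> minimax_risk n \<sigma> a"
proof -
  have "0 \<le> (\<Sum>i<n. (a i)\<^sup>2)" by (rule sum_nonneg) simp
  then have "1/96 * (\<Sum>i<n. (a i)\<^sup>2) \<le> (\<Sum>i<n. (min (a i) \<sigma>)\<^sup>2) / 48"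
    unfolding sum_min_eq[OF pos s d] by simp
  then have "ennreal (1/96 * (\<Sum>i<n. (a i)\<^sup>2)) \<le> ennreal ((\<Sum>i<n. (min (a i) \<sigma>)\<^sup>2) / 48)"
    by (rule ennreal_leI)
  also have "\<dots> \<le> minimax_risk n \<sigma> a" by (rule lower_general[OF pos s])
  finally show ?thesis .
qed

lemma up1:
  fixes a :: "nat \<Rightarrow> real"
  assumes s: "0 < \<sigma>"
  shows "minimax_risk n \<sigma> a \<le> ennreal (2 * (\<Sum>i<n. (a i)\<^sup>2))"
proof -
  have "0 \<le> (\<Sum>i<n. (a i)\<^sup>2)" by (rule sum_nonneg) simp
  then have "real (n - n) * \<sigma>\<^sup>2 + (\<Sum>i<n. (a i)\<^sup>2) / 4 \<le> 2 * (\<Sum>i<n. (a i)\<^sup>2)" by simp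
  then show ?thesis
    by (rule order.trans[OF up_m[OF s order.refl, of n a] ennreal_leI])
qed

lemma low2:
  fixes a :: "nat \<Rightarrow> real"
  assumes pos: "\<forall>i<n. 0 < a i" and mono: "\<forall>i j. i \<le> j \<longrightarrow> j < n \<longrightarrow> a i \<le> a j"
    and s: "0 < \<sigma>" and k: "k < n"
    and h: "(real k + 1) * \<sigma>\<^sup>2 \<le> (\<Sum>i<n-k. (a i)\<^sup>2)"
  shows "ennreal (1/96 * min ((real k + 2) * \<sigma>\<^sup>2) (\<Sum>i<n. (a i)\<^sup>2)) \<le> minimax_risk n \<sigma> a"
proof -
  have M: "(real k + 1) * \<sigma>\<^sup>2 \<le> (\<Sum>i<n. (min (a i) \<sigma>)\<^sup>2)" by (rule sum_min_ge[OF mono s k h])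
  have "min ((real k + 2) * \<sigma>\<^sup>2) (\<Sum>i<n. (a i)\<^sup>2) \<le> (real k + 2) * \<sigma>\<^sup>2" by simp
  also have "\<dots> \<le> 2 * ((real k + 1) * \<sigma>\<^sup>2)" by (simp add: algebra_simps)
  finally have "1/96 * min ((real k + 2) * \<sigma>\<^sup>2) (\<Sum>i<n. (a i)\<^sup>2) \<le> (\<Sum>i<n. (min (a i) \<sigma>)\<^sup>2) / 48"
    using M by linarith
  then have "ennreal (1/96 * min ((real k + 2) * \<sigma>\<^sup>2) (\<Sum>i<n. (a i)\<^sup>2)) \<le> ennreal ((\<Sum>i<n. (min (a i) \<sigma>)\<^sup>2) / 48)"
    by (rule ennreal_leI)
  also have "\<dots> \<le> minimax_risk n \<sigma> a" by (rule lower_general[OF pos s])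
  finally show ?thesis .
qed

lemma up2:
  fixes a :: "nat \<Rightarrow> real"
  assumes s: "0 < \<sigma>" and k: "k < n"
    and h: "(real k + 2) * \<sigma>\<^sup>2 > (\<Sum>i<n-k-1. (a i)\<^sup>2)"
  shows "minimax_risk n \<sigma> a \<le> ennreal (2 * min ((real k + 2) * \<sigma>\<^sup>2) (\<Sum>i<n. (a i)\<^sup>2))"
proof (cases "(real k + 2) * \<sigma>\<^sup>2 \<le> (\<Sum>i<n. (a i)\<^sup>2)")
  case True
  have nk: "real (n - (n - k - 1)) = real k + 1" using k by simp
  have "real (n - (n - k - 1)) * \<sigma>\<^sup>2 + (\<Sum>i<n-k-1. (a i)\<^sup>2) / 4 \<le> 2 * min ((real k + 2) * \<sigma>\<^sup>2) (\<Sum>i<n. (a i)\<^sup>2)"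
  proof -
    have mn: "min ((real k + 2) * \<sigma>\<^sup>2) (\<Sum>i<n. (a i)\<^sup>2) = (real k + 2) * \<sigma>\<^sup>2" using True by simp
    have z: "0 \<le> real k * \<sigma>\<^sup>2" "0 \<le> \<sigma>\<^sup>2" by simp_all
    have e1: "real (n - (n - k - 1)) * \<sigma>\<^sup>2 + (\<Sum>i<n-k-1. (a i)\<^sup>2) / 4 = real k * \<sigma>\<^sup>2 + \<sigma>\<^sup>2 + (\<Sum>i<n-k-1. (a i)\<^sup>2) / 4"
      unfolding nk by (simp add: algebra_simps)
    have e2: "2 * min ((real k + 2) * \<sigma>\<^sup>2) (\<Sum>i<n. (a i)\<^sup>2) = 2 * (real k * \<sigma>\<^sup>2) + 4 * \<sigma>\<^sup>2"
      unfolding mn by (simp add: algebra_simps)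
    have h': "(\<Sum>i<n-k-1. (a i)\<^sup>2) < real k * \<sigma>\<^sup>2 + 2 * \<sigma>\<^sup>2" using h by (simp add: algebra_simps)
    show ?thesis unfolding e1 e2 using z h' by linarith
  qed
  moreover have m: "n - k - 1 \<le> n" by simp
  ultimately show ?thesis
    by (intro order.trans[OF up_m[OF s m, of a] ennreal_leI])
next
  case False
  have "0 \<le> (\<Sum>i<n. (a i)\<^sup>2)" by (rule sum_nonneg) simp
  then have "real (n - n) * \<sigma>\<^sup>2 + (\<Sum>i<n. (a i)\<^sup>2) / 4 \<le> 2 * min ((real k + 2) * \<sigma>\<^sup>2) (\<Sum>i<n. (a i)\<^sup>2)"
    using False by (simp add: min_def)
  then show ?thesis
    by (rule order.trans[OF up_m[OF s order.refl, of n a] ennreal_leI])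
qed

theorem mainTheorem9:
  "\<exists>c C :: real. c > 0 \<and> C > 0 \<and>
     (\<forall>(n::nat) (a::nat \<Rightarrow> real) (\<sigma>::real).
        (\<forall>i<n. 0 < a i) \<longrightarrow> (\<forall>i j. i \<le> j \<longrightarrow> j < n \<longrightarrow> a i \<le> a j) \<longrightarrow> \<sigma> > 0 \<longrightarrow>
        ((\<Sum>i<n. (a i)\<^sup>2) \<le> \<sigma>\<^sup>2 \<longrightarrow>
            ennreal (c * (\<Sum>i<n. (a i)\<^sup>2)) \<le> minimax_risk n \<sigma> a \<and>
            minimax_risk n \<sigma> a \<le> ennreal (C * (\<Sum>i<n. (a i)\<^sup>2))) \<and>
        ((\<Sum>i<n. (a i)\<^sup>2) > \<sigma>\<^sup>2 \<longrightarrow>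
          (\<forall>k<n. (real k + 1) * \<sigma>\<^sup>2 \<le> (\<Sum>i<n-k. (a i)\<^sup>2) \<longrightarrow>
                 (real k + 2) * \<sigma>\<^sup>2 > (\<Sum>i<n-k-1. (a i)\<^sup>2) \<longrightarrow>
            ennreal (c * min ((real k + 2) * \<sigma>\<^sup>2) (\<Sum>i<n. (a i)\<^sup>2)) \<le> minimax_risk n \<sigma> a \<and>
            minimax_risk n \<sigma> a \<le> ennreal (C * min ((real k + 2) * \<sigma>\<^sup>2) (\<Sum>i<n. (a i)\<^sup>2)))))"
proof (rule exI[of _ "1/96::real"], rule exI[of _ "2::real"], intro conjI allI impI)
  show "(0::real) < 1/96" by simp
next
  show "(0::real) < 2" by simp
next
  fix n :: nat and a :: "nat \<Rightarrow> real" and \<sigma> :: real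
  assume pos: "\<forall>i<n. 0 < a i" and mono: "\<forall>i j. i \<le> j \<longrightarrow> j < n \<longrightarrow> a i \<le> a j" and s: "0 < \<sigma>"
  {
    assume d: "(\<Sum>i<n. (a i)\<^sup>2) \<le> \<sigma>\<^sup>2"
    show "ennreal (1/96 * (\<Sum>i<n. (a i)\<^sup>2)) \<le> minimax_risk n \<sigma> a" by (rule low1[OF pos s d])
    show "minimax_risk n \<sigma> a \<le> ennreal (2 * (\<Sum>i<n. (a i)\<^sup>2))" by (rule up1[OF s])
  }
  {
    assume dd: "(\<Sum>i<n. (a i)\<^sup>2) > \<sigma>\<^sup>2"
    fix k assume k: "k < n" and h1: "(real k + 1) * \<sigma>\<^sup>2 \<le> (\<Sum>i<n-k. (a i)\<^sup>2)"
      and h2: "(real k + 2) * \<sigma>\<^sup>2 > (\<Sum>i<n-k-1. (a i)\<^sup>2)"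
    show "ennreal (1/96 * min ((real k + 2) * \<sigma>\<^sup>2) (\<Sum>i<n. (a i)\<^sup>2)) \<le> minimax_risk n \<sigma> a"
      by (rule low2[OF pos mono s k h1])
    show "minimax_risk n \<sigma> a \<le> ennreal (2 * min ((real k + 2) * \<sigma>\<^sup>2) (\<Sum>i<n. (a i)\<^sup>2))"
      by (rule up2[OF s k h2])
  }
qed

end
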